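(* Let $t_n=n(\log n)^{3/4}$. Then $$\lambda\Big(\#\{i\le n:\beta_i\ge t_n\}\ge 2\ \text{for infinitely many } n\Big)=0.$$
   Context: Let $\lambda$ be Lebesgue measure on $[0,1)$, $\tau(x)=2x\bmod1$, $\chi(x)=\lfloor1/x\rfloor$, $B=[1/2,1)$, $\phi(x)=\inf\{n\in\mathbb N_0:\tau^nx\in B\}+1$, $\tau_Bx=\tau^{\phi(x)}x$ (defined $\lambda$-a.e.), and $\beta_i=\chi\circ\tau_B^{\,i-1}$. Logarithms are natural. *)

theory Defs
  imports "HOL-Analysis.Analysis"
begin

definition tau :: "real \<Rightarrow> real" where
  "tau x = frac (2 * x)"

definition chi :: "real \<Rightarrow> nat" where
  "chi x = nat \<lfloor>1 / x\<rfloor>"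

definition Bset :: "real set" where
  "Bset = {1/2..<1}"

definition phi :: "real \<Rightarrow> nat" where
  "phi x = (LEAST n. (tau ^^ n) x \<in> Bset) + 1"

definition tauB :: "real \<Rightarrow> real" where
  "tauB x = (tau ^^ phi x) x"

definition beta :: "nat \<Rightarrow> real \<Rightarrow> nat" where
  "beta i x = chi ((tauB ^^ (i - 1)) x)"

definition tseq :: "nat \<Rightarrow> real" where
  "tseq n = real n * (ln (real n)) powr (3/4)"

end

theory Submission
  imports Defs
begin

lemma tau_pow: "0 \<le> x \<Longrightarrow> 2^n * x < 1 \<Longrightarrow> m \<le> n \<Longrightarrow> (tau^^m) x = 2^m * x"
proof (induction m)
  case 0 then show ?case by simp
next
  case (Suc m)
  have "(2::real)^(Suc m) * x \<le> 2^n * x"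
    using Suc.prems by (intro mult_right_mono power_increasing) auto
  then have "0 \<le> 2 * (2^m * x)" "2 * (2^m*x) < 1" using Suc.prems by auto
  then show ?case using Suc by (simp add: tau_def frac_eq)
qed

lemma tau_pow_0: "(tau^^n) 0 = 0"
  by (induction n) (auto simp: tau_def)

lemma tauB_0: "tauB 0 = 0"
  by (simp add: tauB_def tau_pow_0)

lemma tauB_piece:
  assumes "1/2^(k+1) \<le> x" "x < 1/2^k"
  shows "tauB x = 2^(k+1)*x - 1"
proof -
  have x0: "0 \<le> x" using assms(1) by (smt (verit) zero_le_divide_1_iff zero_le_power)
  have a: "2^k * x < 1" using assms(2) by (simp add: field_simps)
  have b: "1/2 \<le> 2^k * x" using assms(1) by (simp add: field_simps)
  have P: "(tau^^m) x = 2^m * x" if "m \<le> k" for m using tau_pow[OF x0 a that] .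
  have "(LEAST n. (tau ^^ n) x \<in> Bset) = k"
  proof (rule Least_equality)
    show "(tau ^^ k) x \<in> Bset" using P[of k] a b by (simp add: Bset_def)
  next
    fix y assume y: "(tau ^^ y) x \<in> Bset"
    show "k \<le> y"
    proof (rule ccontr)
      assume "\<not> k \<le> y"
      then have "y < k" by simp
      then have "(2::real)^(y+1) * x \<le> 2^k * x"
        using x0 by (intro mult_right_mono power_increasing) auto
      then have "2^y * x < 1/2" using a by simp
      then show False using y P[of y] \<open>y<k\<close> by (simp add: Bset_def)
    qed
  qed
  then have "phi x = k+1" by (simp add: phi_def)
  then have "tauB x = tau (2^k * x)" using P[of k] by (simp add: tauB_def)
  also have "\<dots> = 2^(k+1)*x - 1"
  proof -
    have "floor (2 * (2^k * x)) = 1" using a b by (intro floor_unique) auto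
    then show ?thesis by (simp add: tau_def frac_def)
  qed
  finally show ?thesis .
qed

lemma exists_piece:
  fixes x :: real
  assumes "0 < x" "x < 1"
  shows "\<exists>k. 1/2^(k+1) \<le> x \<and> x < 1/2^k"
proof -
  obtain n where "(1/2::real)^n < x" using real_arch_pow_inv[OF assms(1)] by force
  moreover have "1/2^(n+1) = (1/2::real)^n / 2" by (simp add: power_one_over)
  ultimately have ex: "\<exists>n. 1/2^(n+1) \<le> (x::real)"
    using zero_less_power[of "1/2::real" n] by (intro exI[of _ n]) linarith
  define m where "m = (LEAST n. 1/2^(n+1) \<le> x)"
  have m1: "1/2^(m+1) \<le> x" unfolding m_def by (rule LeastI_ex[OF ex])
  have "x < 1/2^m"
  proof (cases m)
    case 0 then show ?thesis using assms by simp
  next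
    case (Suc j)
    then have "\<not> 1/2^(j+1) \<le> x" using not_less_Least[of j "\<lambda>n. 1/2^(n+1) \<le> x"] m_def by auto
    then show ?thesis using Suc by simp
  qed
  with m1 show ?thesis by blast
qed

lemma tauB_range:
  assumes x: "0 \<le> x" "x < 1"
  shows "0 \<le> tauB x \<and> tauB x < 1"
proof (cases "x = 0")
  case True then show ?thesis by (simp add: tauB_0)
next
  case False
  then have "0 < x" using x by simp
  then obtain k where k: "1/2^(k+1) \<le> x" "x < 1/2^k" using exists_piece[OF _ x(2)] by blast
  have "tauB x = 2^(k+1)*x - 1" using tauB_piece[OF k] .
  moreover have "1 \<le> 2^(k+1)*x" using k(1) by (simp add: field_simps)
  moreover have "2^(k+1)*x < 2" using k(2) by (simp add: field_simps)
  ultimately show ?thesis by simp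
qed

lemma iter_range: "0 \<le> x \<Longrightarrow> x < 1 \<Longrightarrow> 0 \<le> (tauB^^n) x \<and> (tauB^^n) x < 1"
proof (induction n)
  case 0 then show ?case by simp
next
  case (Suc n) then show ?case using tauB_range[of "(tauB^^n) x"] by simp
qed


definition pre :: "real set \<Rightarrow> real set" where
  "pre A = {x \<in> {0..<1}. tauB x \<in> A}"

definition img :: "nat \<Rightarrow> real set \<Rightarrow> real set" where
  "img k A = (\<lambda>y. (1/2^(k+1)) *\<^sub>R y + 1/2^(k+1)) ` A"

lemma piece_img:
  assumes k: "1/2^(k+1) \<le> x" "x < 1/2^k" and "tauB x \<in> A"
  shows "x \<in> img k A"
proof -
  have e: "tauB x = 2^(k+1)*x - 1" using tauB_piece[OF k] .
  have "x = (1/2^(k+1)) *\<^sub>R (tauB x) + 1/2^(k+1)" unfolding e by (simp add: field_simps)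
  then show ?thesis unfolding img_def using assms(3) by (rule image_eqI)
qed

lemma img_sub:
  assumes "A \<subseteq> {0..<1}"
  shows "img k A \<subseteq> pre A"
proof
  fix x assume "x \<in> img k A"
  then obtain y where y: "y \<in> A" and x: "x = (1/2^(k+1)) * y + 1/2^(k+1)" unfolding img_def by auto
  have y01: "0 \<le> y" "y < 1" using y assms by auto
  have c: "(1/2^(k+1)::real) * 2 = 1/2^k" by simp
  have k1: "1/2^(k+1) \<le> x" using y01 x by simp
  have "x < (1/2^(k+1)) * 1 + 1/2^(k+1)"
    unfolding x by (intro add_strict_right_mono mult_strict_left_mono) (use y01 in auto)
  then have k2: "x < 1/2^k" using c by simp
  have "(1::real)/2^k \<le> 1" "0 \<le> (1::real)/2^(k+1)" by simp_all
  then have x01: "0 \<le> x" "x < 1" using k1 k2 by linarith+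
  have "tauB x = 2^(k+1)*x - 1" using tauB_piece[OF k1 k2] .
  also have "\<dots> = y" unfolding x by (simp add: field_simps)
  finally show "x \<in> pre A" using y x01 by (simp add: pre_def)
qed

lemma pre_eq:
  assumes "A \<subseteq> {0..<1}"
  shows "pre A = (if 0 \<in> A then {0} else {}) \<union> (\<Union>k. img k A)"
proof
  show "pre A \<subseteq> (if 0 \<in> A then {0} else {}) \<union> (\<Union>k. img k A)"
  proof
    fix x assume x: "x \<in> pre A"
    show "x \<in> (if 0 \<in> A then {0} else {}) \<union> (\<Union>k. img k A)"
    proof (cases "x = 0")
      case True then show ?thesis using x by (simp add: pre_def tauB_0)
    next
      case False
      then have "0 < x" "x < 1" using x by (auto simp: pre_def)
      then obtain k where k: "1/2^(k+1) \<le> x" "x < 1/2^k" using exists_piece by blast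
      then have "x \<in> img k A" using x by (intro piece_img) (auto simp: pre_def)
      then show ?thesis by blast
    qed
  qed
next
  show "(if 0 \<in> A then {0} else {}) \<union> (\<Union>k. img k A) \<subseteq> pre A"
    using img_sub[OF assms] by (auto simp: pre_def tauB_0)
qed

lemma img_meas:
  assumes "A \<in> sets lebesgue"
  shows "img k A \<in> sets lebesgue"
proof -
  define c :: real where "c = 1/2^(k+1)"
  have c0: "c \<noteq> 0" by (simp add: c_def)
  have e1: "img k A = (\<lambda>x. c + x) ` ((\<lambda>y. c *\<^sub>R y) ` A)"
    unfolding img_def c_def by (auto simp: image_image add.commute)
  have e2: "(\<lambda>y. c *\<^sub>R y) ` A = ((*\<^sub>R) (1/c)) -` A \<inter> space lebesgue"
  proof (intro set_eqI iffI)
    fix z assume "z \<in> (\<lambda>y. c *\<^sub>R y) ` A" then show "z \<in> ((*\<^sub>R) (1/c)) -` A \<inter> space lebesgue"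
      using c0 by auto
  next
    fix z assume "z \<in> ((*\<^sub>R) (1/c)) -` A \<inter> space lebesgue"
    then have "(1/c) *\<^sub>R z \<in> A" by simp
    moreover have "z = c *\<^sub>R ((1/c) *\<^sub>R z)" using c0 by simp
    ultimately show "z \<in> (\<lambda>y. c *\<^sub>R y) ` A" by (rule rev_image_eqI)
  qed
  have "(\<lambda>y. c *\<^sub>R y) ` A \<in> sets lebesgue"
    unfolding e2 by (rule measurable_sets[OF lebesgue_measurable_scaling assms])
  then show ?thesis unfolding e1 by (rule lebesgue_sets_translation)
qed

lemma img_emeasure:
  "emeasure lebesgue (img k A) = ennreal (1/2^(k+1)) * emeasure lebesgue A"
  using emeasure_lebesgue_affine[of "1/2^(k+1)" "1/2^(k+1)" A]
  by (simp add: img_def)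

lemma pre_meas:
  assumes "A \<in> sets lebesgue" "A \<subseteq> {0..<1}"
  shows "pre A \<in> sets lebesgue"
proof -
  have z: "{0::real} \<in> sets lebesgue" by simp
  have u: "(\<Union>k. img k A) \<in> sets lebesgue"
    using img_meas[OF assms(1)] by (auto intro!: sets.countable_UN)
  have "{0} \<union> (\<Union>k. img k A) \<in> sets lebesgue" using z u by (rule sets.Un)
  moreover have "{} \<union> (\<Union>k. img k A) \<in> sets lebesgue" using u by simp
  ultimately show ?thesis
    unfolding pre_eq[OF assms(2)] by (cases "0 \<in> A") simp_all
qed

lemma geo_sum: "(\<Sum>k. ennreal (1/2^(k+m+1))) = ennreal (1/2^m)"
proof -
  have e: "(\<lambda>k. 1/2^(k+m+1) :: real) = (\<lambda>k. (1/2^(m+1)) * (1/2)^k)"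
    by (auto simp: fun_eq_iff power_add power_one_over)
  have sm: "summable (\<lambda>k. (1/2::real)^k)" by (rule summable_geometric) simp
  have g: "(\<Sum>k. (1/2::real)^k) = 2" using suminf_geometric[of "1/2::real"] by simp
  have "(\<Sum>k. 1/2^(k+m+1) :: real) = 1/2^m"
    unfolding e suminf_mult[OF sm] g by simp
  moreover have "summable (\<lambda>k. 1/2^(k+m+1) :: real)"
    unfolding e by (intro summable_mult sm)
  ultimately show ?thesis by (subst suminf_ennreal2) auto
qed

lemma union_img_bound:
  assumes "A \<in> sets lebesgue"
  shows "emeasure lebesgue (\<Union>k. img (k+m) A) \<le> ennreal (1/2^m) * emeasure lebesgue A"
proof -
  have "emeasure lebesgue (\<Union>k. img (k+m) A) \<le> (\<Sum>k. emeasure lebesgue (img (k+m) A))"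
    using img_meas[OF assms] by (intro emeasure_subadditive_countably) auto
  also have "\<dots> = (\<Sum>k. ennreal (1/2^(k+m+1)) * emeasure lebesgue A)"
    by (simp add: img_emeasure add.assoc)
  also have "\<dots> = ennreal (1/2^m) * emeasure lebesgue A"
    by (simp only: ennreal_suminf_multc geo_sum)
  finally show ?thesis .
qed


lemma pre_sub0:
  assumes "A \<subseteq> {0..<1}"
  shows "pre A \<subseteq> {0} \<union> (\<Union>k. img (k+0) A)"
  using pre_eq[OF assms] by auto

lemma emeasure_single0_sets: "{0::real} \<in> sets lebesgue"
  by simp

lemma emeasure_single0: "emeasure lebesgue {0::real} = 0"
  by simp

lemma pre_le:
  assumes "A \<in> sets lebesgue" "A \<subseteq> {0..<1}"
  shows "emeasure lebesgue (pre A) \<le> emeasure lebesgue A"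
proof -
  have u: "(\<Union>k. img (k+0) A) \<in> sets lebesgue"
    using img_meas[OF assms(1)] by (auto intro!: sets.countable_UN)
  have "emeasure lebesgue (pre A) \<le> emeasure lebesgue ({0} \<union> (\<Union>k. img (k+0) A))"
    using pre_sub0[OF assms(2)] sets.Un[OF emeasure_single0_sets u] by (intro emeasure_mono) auto
  also have "\<dots> \<le> emeasure lebesgue {0::real} + emeasure lebesgue (\<Union>k. img (k+0) A)"
    using emeasure_single0_sets u by (rule emeasure_subadditive)
  also have "\<dots> \<le> ennreal (1/2^0) * emeasure lebesgue A"
    using union_img_bound[OF assms(1), of 0] by simp
  finally show ?thesis by simp
qed

lemma pre_small:
  assumes "A \<in> sets lebesgue" "A \<subseteq> {0..<1}" "0 < s"
  shows "emeasure lebesgue (pre A \<inter> {0..s}) \<le> ennreal (2 * s) * emeasure lebesgue A"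
proof -
  obtain n where "(1/2::real)^n < s" using real_arch_pow_inv[OF assms(3)] by force
  moreover have "1/2^(n+1) = (1/2::real)^n / 2" by (simp add: power_one_over)
  ultimately have ex: "\<exists>n. 1/2^(n+1) \<le> s"
    using zero_less_power[of "1/2::real" n] by (intro exI[of _ n]) linarith
  define m where "m = (LEAST n. 1/2^(n+1) \<le> s)"
  have m1: "1/2^(m+1) \<le> s" unfolding m_def by (rule LeastI_ex[OF ex])
  have sub: "pre A \<inter> {0..s} \<subseteq> {0} \<union> (\<Union>k. img (k+m) A)"
  proof
    fix x assume x: "x \<in> pre A \<inter> {0..s}"
    show "x \<in> {0} \<union> (\<Union>k. img (k+m) A)"
    proof (cases "x = 0")
      case True then show ?thesis by simp
    next
      case False
      then have "0 < x" "x < 1" using x by (auto simp: pre_def)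
      then obtain j where j: "1/2^(j+1) \<le> x" "x < 1/2^j" using exists_piece by blast
      then have xi: "x \<in> img j A" using x by (intro piece_img) (auto simp: pre_def)
      have "1/2^(j+1) \<le> s" using j(1) x by auto
      then have "m \<le> j" unfolding m_def by (rule Least_le)
      then have "j = (j - m) + m" by simp
      then have "x \<in> img ((j-m)+m) A" using xi by metis
      then show ?thesis by blast
    qed
  qed
  have u: "(\<Union>k. img (k+m) A) \<in> sets lebesgue"
    using img_meas[OF assms(1)] by (auto intro!: sets.countable_UN)
  have "emeasure lebesgue (pre A \<inter> {0..s}) \<le> emeasure lebesgue ({0} \<union> (\<Union>k. img (k+m) A))"
    using sub sets.Un[OF emeasure_single0_sets u] by (intro emeasure_mono) auto
  also have "\<dots> \<le> emeasure lebesgue {0::real} + emeasure lebesgue (\<Union>k. img (k+m) A)"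
    using emeasure_single0_sets u by (rule emeasure_subadditive)
  also have "\<dots> \<le> ennreal (1/2^m) * emeasure lebesgue A"
    using union_img_bound[OF assms(1), of m] by simp
  also have "\<dots> \<le> ennreal (2 * s) * emeasure lebesgue A"
  proof (intro mult_right_mono ennreal_leI)
    show "1/2^m \<le> 2 * s" using m1 by (simp add: field_simps)
  qed simp
  finally show ?thesis .
qed

definition P :: "nat \<Rightarrow> real set \<Rightarrow> real set" where
  "P n A = {x \<in> {0..<1}. (tauB^^n) x \<in> A}"

lemma P_sub: "P n A \<subseteq> {0..<1}" by (auto simp: P_def)

lemma P_Suc: "P (Suc n) A = pre (P n A)"
proof (intro set_eqI iffI)
  fix x assume "x \<in> P (Suc n) A"
  then show "x \<in> pre (P n A)"
    using tauB_range[of x] by (auto simp: P_def pre_def funpow_swap1)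
next
  fix x assume "x \<in> pre (P n A)"
  then show "x \<in> P (Suc n) A"
    by (auto simp: P_def pre_def funpow_swap1)
qed

lemma P_meas: "A \<in> sets lebesgue \<Longrightarrow> P n A \<in> sets lebesgue"
proof (induction n)
  case 0
  have "P 0 A = A \<inter> {0..<1}" by (auto simp: P_def)
  have I: "{0..<1::real} \<in> sets lebesgue" by simp
  have "A \<inter> {0..<1} \<in> sets lebesgue" using 0 I by (rule sets.Int)
  then show ?case using \<open>P 0 A = _\<close> by simp
next
  case (Suc n) then show ?case by (simp add: P_Suc pre_meas P_sub)
qed

lemma P_le: "A \<in> sets lebesgue \<Longrightarrow> emeasure lebesgue (P n A) \<le> emeasure lebesgue A"
proof (induction n)
  case 0
  have "P 0 A = A \<inter> {0..<1}" by (auto simp: P_def)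
  then show ?case using 0 by (metis emeasure_mono Int_lower1)
next
  case (Suc n)
  then show ?case using pre_le[OF P_meas[OF Suc.prems] P_sub, of n] by (simp add: P_Suc)
qed

definition C :: "nat \<Rightarrow> nat \<Rightarrow> real \<Rightarrow> real set" where
  "C a d s = P a ({0..s} \<inter> pre (P d {0..s}))"

lemma C_meas: "C a d s \<in> sets lebesgue"
  unfolding C_def by (intro P_meas sets.Int pre_meas P_sub) auto

lemma C_bound:
  assumes "0 < s"
  shows "emeasure lebesgue (C a d s) \<le> ennreal (2 * s * s)"
proof -
  have "emeasure lebesgue (C a d s) \<le> emeasure lebesgue (pre (P d {0..s}) \<inter> {0..s})"
    unfolding C_def by (rule order_trans[OF P_le]) (auto intro!: pre_meas P_meas P_sub simp: Int_commute)
  also have "\<dots> \<le> ennreal (2 * s) * emeasure lebesgue (P d {0..s})"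
    using assms by (intro pre_small P_meas P_sub) auto
  also have "\<dots> \<le> ennreal (2 * s) * emeasure lebesgue {0..s}"
    by (intro mult_left_mono P_le) auto
  also have "\<dots> = ennreal (2 * s * s)"
    using assms by (simp add: ennreal_mult)
  finally show ?thesis .
qed

lemma iter_split: "(tauB^^(a+d+1)) x = (tauB^^d) (tauB ((tauB^^a) x))"
proof -
  have "a + d + 1 = d + Suc a" by simp
  then show ?thesis by (simp only: funpow_add funpow_Suc_right comp_apply funpow_swap1)
qed

lemma C_mem:
  assumes "0 \<le> x" "x < 1" "(tauB^^a) x \<in> {0..s}" "(tauB^^(a+d+1)) x \<in> {0..s}"
  shows "x \<in> C a d s"
proof -
  define y where "y = (tauB^^a) x"
  have y: "0 \<le> y" "y < 1" using iter_range[OF assms(1,2)] y_def by auto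
  have "tauB y \<in> P d {0..s}" using tauB_range[OF y] assms(4) iter_split[of a d x]
    by (simp add: P_def y_def)
  then have "y \<in> {0..s} \<inter> pre (P d {0..s})" using y assms(3) y_def by (simp add: pre_def)
  then show ?thesis using assms(1,2) y_def by (simp add: C_def P_def)
qed


lemma tseq_pos: "0 < tseq (2^(k+1))"
proof -
  have "(1::real) < 2^(k+1)" by (rule one_less_power) simp_all
  then have "0 < ln (real (2^(k+1)))" by simp
  then show ?thesis by (simp add: tseq_def)
qed

lemma tseq_mono:
  assumes "1 \<le> m" "m \<le> n"
  shows "tseq m \<le> tseq n"
proof -
  have l: "0 \<le> ln (real m)" "ln (real m) \<le> ln (real n)" using assms by auto
  have "ln (real m) powr (3/4) \<le> ln (real n) powr (3/4)" using l by (intro powr_mono2) auto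
  then show ?thesis unfolding tseq_def using assms by (intro mult_mono) auto
qed

lemma beta_large:
  assumes "0 \<le> x" "x < 1" "0 < t" "t \<le> real (beta i x)"
  shows "(tauB^^(i-1)) x \<in> {0..1/t}"
proof -
  define y where "y = (tauB^^(i-1)) x"
  have y: "0 \<le> y" "y < 1" using iter_range[OF assms(1,2)] y_def by auto
  have b: "t \<le> real (nat \<lfloor>1/y\<rfloor>)" using assms(4) by (simp add: beta_def chi_def y_def)
  then have "0 < \<lfloor>1/y\<rfloor>" using assms(3) by linarith
  then have f: "real (nat \<lfloor>1/y\<rfloor>) = of_int \<lfloor>1/y\<rfloor>" by (metis of_nat_nat less_imp_le)
  have "t \<le> 1/y" using b f of_int_floor_le[of "1/y"] by linarith
  moreover have "0 < y" using \<open>0 < \<lfloor>1/y\<rfloor>\<close> y by (cases "y = 0") auto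
  ultimately have "y \<le> 1/t" using assms(3) by (simp add: field_simps)
  then show ?thesis using y y_def by simp
qed

lemma two_elems:
  assumes "2 \<le> card S"
  shows "\<exists>a b. a \<in> S \<and> b \<in> S \<and> a < (b::nat)"
proof -
  have fin: "finite S" using assms by (metis card.infinite not_numeral_le_zero)
  have "S \<noteq> {}" using assms by auto
  then obtain a where a: "a \<in> S" by blast
  have "card (S - {a}) \<ge> 1" using assms a fin by (simp add: card_Diff_singleton)
  then have "S - {a} \<noteq> {}" by (metis card.empty le_zero_eq one_neq_zero)
  then obtain b where b: "b \<in> S" "b \<noteq> a" by blast
  show ?thesis
  proof (cases "a < b")
    case True then show ?thesis using a b by blast
  next
    case False then have "b < a" using b by simp
    then show ?thesis using a b by blast
  qed
qed

definition E :: "nat \<Rightarrow> real set" where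
  "E k = (\<Union>p\<in>{..<(2::nat)^(k+2)} \<times> {..<(2::nat)^(k+2)}. C (fst p) (snd p) (1 / tseq (2^(k+1))))"

lemma E_meas: "E k \<in> sets lebesgue"
  unfolding E_def using C_meas by (intro sets.finite_UN) auto

lemma E_emeasure:
  "emeasure lebesgue (E k) \<le> ennreal (real (2^(k+2)) * real (2^(k+2)) * (2 * (1/tseq (2^(k+1))) * (1/tseq (2^(k+1)))))"
proof -
  define s where "s = 1 / tseq (2^(k+1))"
  have s0: "0 < s" using tseq_pos[of k] by (simp add: s_def)
  define I where "I = {..<(2::nat)^(k+2)} \<times> {..<(2::nat)^(k+2)}"
  have "emeasure lebesgue (E k) \<le> (\<Sum>p\<in>I. emeasure lebesgue (C (fst p) (snd p) s))"
    unfolding E_def s_def[symmetric] I_def[symmetric]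
    using C_meas by (intro emeasure_subadditive_finite) (auto simp: I_def)
  also have "\<dots> \<le> (\<Sum>p\<in>I. ennreal (2 * s * s))"
    using C_bound[OF s0] by (intro sum_mono) auto
  also have "\<dots> = ennreal (real (card I) * (2 * s * s))"
    using s0 by (simp add: ennreal_mult ennreal_of_nat_eq_real_of_nat)
  also have "real (card I) = real (2^(k+2)) * real (2^(k+2))" by (simp add: I_def)
  finally show ?thesis by (simp add: s_def)
qed

lemma E_measure:
  "measure lebesgue (E k) \<le> 8 * (real (k+1) * ln 2) powr (-3/2)"
proof -
  define L where "L = real (k+1) * ln 2"
  have L0: "0 < L" by (simp add: L_def)
  have lnp: "ln (real ((2::nat)^(k+1))) = L" unfolding L_def of_nat_power of_nat_numeral
    by (rule ln_realpow; simp)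
  have t: "tseq (2^(k+1)) = 2^(k+1) * L powr (3/4)" unfolding tseq_def lnp by simp
  have q: "L powr (3/4) * L powr (3/4) = L powr (3/2)" by (simp add: powr_add[symmetric])
  have m: "L powr (3/2) * L powr (-3/2) = 1" using L0 by (simp add: powr_add[symmetric])
  have "real (2^(k+2)) * real (2^(k+2)) * (2 * (1/tseq (2^(k+1))) * (1/tseq (2^(k+1))))
      = 8 / (L powr (3/4) * L powr (3/4))"
    unfolding t using L0 by (simp add: field_simps power_add)
  also have "\<dots> = 8 * L powr (-3/2)" unfolding q using m L0
    by (simp add: field_simps)
  finally have eq: "real (2^(k+2)) * real (2^(k+2)) * (2 * (1/tseq (2^(k+1))) * (1/tseq (2^(k+1))))
      = 8 * L powr (-3/2)" .
  show ?thesis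
    unfolding measure_def using E_emeasure[of k] eq
    by (intro enn2real_leI) (auto simp: L_def)
qed

lemma summable_bound: "summable (\<lambda>k. 8 * (real (k+1) * ln 2) powr (-3/2))"
proof -
  have e: "(\<lambda>k. 8 * (real (k+1) * ln 2) powr (-3/2)) = (\<lambda>k. (8 * ln 2 powr (-3/2)) * real (k+1) powr (-3/2))"
    by (auto simp: fun_eq_iff powr_mult)
  have "summable (\<lambda>n. real n powr (-3/2))" by (subst summable_real_powr_iff) simp
  then have "summable (\<lambda>k. real (k+1) powr (-3/2))"
    using summable_iff_shift[of "\<lambda>n. real n powr (-3/2)" 1] by simp
  then show ?thesis unfolding e by (rule summable_mult)
qed

lemma bad_sub:
  "{x \<in> {0..<1::real}. \<exists>\<^sub>\<infinity> n. card {i \<in> {1..n}. real (beta i x) \<ge> tseq n} \<ge> 2} \<subseteq> limsup E"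
proof
  fix x assume xb: "x \<in> {x \<in> {0..<1::real}. \<exists>\<^sub>\<infinity> n. card {i \<in> {1..n}. real (beta i x) \<ge> tseq n} \<ge> 2}"
  then have x01: "0 \<le> x" "x < 1" by auto
  have inf: "\<forall>m. \<exists>n>m. card {i \<in> {1..n}. real (beta i x) \<ge> tseq n} \<ge> 2"
    using xb by (simp add: INFM_nat)
  have "\<exists>k\<ge>K. x \<in> E k" for K
  proof -
    obtain n where n: "n > 2^(K+1)" and c: "card {i \<in> {1..n}. real (beta i x) \<ge> tseq n} \<ge> 2"
      using inf by blast
    have "n \<ge> 1" using n by (metis less_imp_le_nat one_le_power order_trans one_le_numeral)
    then obtain j where j: "2^j \<le> n" "n < 2^(j+1)" using ex_power_ivl1[of 2 n] by auto
    have "K + 1 \<le> j"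
    proof (rule ccontr)
      assume "\<not> K + 1 \<le> j"
      then have "j + 1 \<le> K + 1" by simp
      then have "(2::nat)^(j+1) \<le> 2^(K+1)" by (rule power_increasing) simp
      then show False using n j(2) by linarith
    qed
    define k where "k = j - 1"
    have jk: "j = k + 1" using \<open>K+1 \<le> j\<close> by (simp add: k_def)
    have kK: "K \<le> k" using \<open>K+1 \<le> j\<close> by (simp add: k_def)
    define t where "t = tseq (2^(k+1))"
    have t0: "0 < t" using tseq_pos by (simp add: t_def)
    have tn: "t \<le> tseq n" unfolding t_def using j jk by (intro tseq_mono) auto
    obtain i1 i2 where i: "i1 \<in> {i \<in> {1..n}. real (beta i x) \<ge> tseq n}"
        "i2 \<in> {i \<in> {1..n}. real (beta i x) \<ge> tseq n}" "i1 < i2"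
      using two_elems[OF c] by blast
    have b1: "(tauB^^(i1-1)) x \<in> {0..1/t}" using i tn by (intro beta_large[OF x01 t0]) auto
    have b2: "(tauB^^(i2-1)) x \<in> {0..1/t}" using i tn by (intro beta_large[OF x01 t0]) auto
    define a where "a = i1 - 1"
    define d where "d = i2 - i1 - 1"
    have ad: "a + d + 1 = i2 - 1" using i by (auto simp: a_def d_def)
    have "x \<in> C a d (1/t)" using b1 b2 ad by (intro C_mem[OF x01]) (auto simp: a_def)
    moreover have "a < 2^(k+2)" "d < 2^(k+2)"
      using i j jk by (auto simp: a_def d_def)
    ultimately have "x \<in> E k" unfolding E_def t_def by force
    then show ?thesis using kK by blast
  qed
  then show "x \<in> limsup E" by (auto simp: limsup_INF_SUP)
qed

theorem mainTheorem12:
  shows "{x \<in> {0..<1::real}. \<exists>\<^sub>\<infinity> n.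
            card {i \<in> {1..n}. real (beta i x) \<ge> tseq n} \<ge> 2} \<in> null_sets lebesgue"
proof -
  have fin: "emeasure lebesgue (E k) < \<infinity>" for k
    using E_emeasure[of k] by (rule le_less_trans) simp
  have sm: "summable (\<lambda>k. measure lebesgue (E k))"
    by (rule summable_comparison_test'[OF summable_bound, of 0]) (use E_measure in auto)
  have "limsup E \<in> null_sets lebesgue"
    by (rule borel_cantelli_limsup1[OF E_meas fin sm])
  then show ?thesis by (rule completion.complete2[OF bad_sub])
qed

end
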